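(* Let $N_r, N_t, L, m$ be positive integers with $L \le \min\{N_r, N_t\}$ and $L \le m \le N_t$. Let $h_1,\dots,h_L \in \mathbb{C}$ be path gains and let $\theta_{r,1},\dots,\theta_{r,L}$ and $\theta_{t,1},\dots,\theta_{t,L}$ be angles in $[-\pi/2,\pi/2)$. Define the channel matrix $$\mathbf{H} = \sqrt{\tfrac{N_r N_t}{L}}\sum_{l=1}^{L} h_l\, \mathbf{a}_r(\theta_{r,l})\, \mathbf{a}_t(\theta_{t,l})^H = \mathbf{A}_r \operatorname{diag}(\mathbf{h})\mathbf{A}_t^H \cdot \sqrt{\tfrac{N_rN_t}{L}},$$ where $\mathbf{a}_r(\theta) = \frac{1}{\sqrt{N_r}}[1, e^{-j\pi\sin\theta}, \dots, e^{-j\pi (N_r-1)\sin\theta}]^T \in \mathbb{C}^{N_r}$ and $\mathbf{a}_t(\theta) = \frac{1}{\sqrt{N_t}}[1, e^{-j\pi\sin\theta}, \dots, e^{-j\pi (N_t-1)\sin\theta}]^T\in\mathbb{C}^{N_t}$. Let $\mathbf{S} = \begin{bmatrix}\mathbf{I}_m \\ \mathbf{0}_{(N_t-m)\times m}\end{bmatrix} \in \mathbb{R}^{N_t\times m}$ and $\mathbf{H}_S = \mathbf{H}\mathbf{S}$, i.e. $\mathbf{H}_S$ consists of the first $m$ columns of $\mathbf{H}$. If the angles $\theta_{t,1},\dots,\theta_{t,L}$ are pairwise distinct and the angles $\theta_{r,1},\dots,\theta_{r,L}$ are pairwise distinct, then the column spaces of $\mathbf{H}_S$ and $\mathbf{H}$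 coincide: $\operatorname{col}(\mathbf{H}_S) = \operatorname{col}(\mathbf{H})$.
   Context: $\operatorname{col}(\mathbf{X})$ denotes the subspace spanned by the columns of $\mathbf{X}$; $j=\sqrt{-1}$; $(\cdot)^H$ is conjugate transpose. The array response vectors correspond to uniform linear arrays with half-wavelength antenna spacing. *)

theory Defs
  imports Complex_Main "Jordan_Normal_Form.Matrix"
begin

(* ULA response vector a(theta) in C^N, half-wavelength spacing:
   entries exp(-j*pi*i*sin theta)/sqrt N, i = 0..N-1 *)
definition ula :: "nat \<Rightarrow> real \<Rightarrow> complex vec" where
  "ula N \<theta> = vec N (\<lambda>i. exp (- \<i> * complex_of_real (pi * real i * sin \<theta>)) / complex_of_real (sqrt (real N)))"

(* H = sqrt(Nr Nt / L) * sum_{l<L} h_l a_r(theta_r l) a_t(theta_t l)^H  (paths indexed 0..L-1) *)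
definition channel :: "nat \<Rightarrow> nat \<Rightarrow> nat \<Rightarrow> (nat \<Rightarrow> complex) \<Rightarrow> (nat \<Rightarrow> real) \<Rightarrow> (nat \<Rightarrow> real) \<Rightarrow> complex mat" where
  "channel Nr Nt L h \<theta>r \<theta>t = mat Nr Nt (\<lambda>(i,k).
      complex_of_real (sqrt (real Nr * real Nt / real L)) *
      (\<Sum>l<L. h l * (ula Nr (\<theta>r l) $ i) * cnj (ula Nt (\<theta>t l) $ k)))"

definition sel_mat :: "nat \<Rightarrow> nat \<Rightarrow> complex mat" where
  "sel_mat Nt m = mat Nt m (\<lambda>(i,k). if i = k then 1 else 0)"

definition col_space :: "complex mat \<Rightarrow> complex vec set" where
  "col_space M = {M *\<^sub>v x | x. x \<in> carrier_vec (dim_col M)}"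

end

theory Submission
  imports Defs "HOL-Analysis.Analysis"
begin

lemma lagrange_exists:
  fixes w z :: "nat \<Rightarrow> complex"
  assumes inj: "inj_on w {..<L}" and L: "0 < L"
  shows "\<exists>p. degree p < L \<and> (\<forall>i<L. poly p (w i) = z i)"
proof -
  define D where "D l = (\<Prod>j\<in>{..<L}-{l}. (w l - w j))" for l
  define q where "q l = (\<Prod>j\<in>{..<L}-{l}. [:- w j, 1:])" for l
  define p where "p = (\<Sum>l<L. smult (z l / D l) (q l))"
  have dq: "degree (q l) \<le> L - 1" if "l < L" for l
  proof -
    have "degree (q l) \<le> sum (degree \<circ> (\<lambda>j. [:- w j, 1:])) ({..<L}-{l})"
      unfolding q_def by (rule degree_prod_sum_le) simp
    also have "\<dots> = card ({..<L}-{l})" by simp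
    also have "\<dots> = L - 1" using that by simp
    finally show ?thesis .
  qed
  have "degree p \<le> L - 1"
    unfolding p_def
    by (rule degree_sum_le) (use dq in \<open>auto intro: order.trans[OF degree_smult_le]\<close>)
  hence dp: "degree p < L" using L by simp
  have "poly p (w i) = z i" if i: "i < L" for i
  proof -
    have pq: "poly (q l) (w i) = (\<Prod>j\<in>{..<L}-{l}. (w i - w j))" for l
      unfolding q_def poly_prod by simp
    have z0: "poly (q l) (w i) = 0" if "l < L" "l \<noteq> i" for l
      unfolding pq using i that by (intro prod_zero) auto
    have Dn: "D i \<noteq> 0"
      unfolding D_def using inj i by (auto simp: inj_on_def)
    have "poly p (w i) = (\<Sum>l<L. z l / D l * poly (q l) (w i))"
      unfolding p_def poly_sum by simp
    also have "\<dots> = z i / D i * poly (q i) (w i)"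
      using i z0 by (subst sum.remove[of _ i]) (auto intro!: sum.neutral)
    also have "\<dots> = z i" using Dn unfolding pq D_def by simp
    finally show ?thesis .
  qed
  thus ?thesis using dp by blast
qed


lemma cnj_ula:
  assumes "k < N"
  shows "cnj (ula N \<theta> $ k) = exp (\<i> * complex_of_real (pi * sin \<theta>)) ^ k / complex_of_real (sqrt (real N))"
proof -
  have "cnj (ula N \<theta> $ k) = exp (\<i> * complex_of_real (pi * real k * sin \<theta>)) / complex_of_real (sqrt (real N))"
    using assms by (simp add: ula_def exp_cnj)
  also have "\<i> * complex_of_real (pi * real k * sin \<theta>) = of_nat k * (\<i> * complex_of_real (pi * sin \<theta>))"
    by simp
  also have "exp \<dots> = exp (\<i> * complex_of_real (pi * sin \<theta>)) ^ k"
    by (rule exp_of_nat_mult)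
  finally show ?thesis .
qed

lemma exp_inj:
  fixes s t :: real
  assumes "-1 \<le> s" "s < 1" "-1 \<le> t" "t < 1"
    and "exp (\<i> * complex_of_real (pi * s)) = exp (\<i> * complex_of_real (pi * t))"
  shows "s = t"
proof -
  have "exp (\<i> * complex_of_real (pi * s) - \<i> * complex_of_real (pi * t)) = 1"
    using assms(5) by (simp add: exp_diff)
  then obtain n :: int where n: "pi * s - pi * t = of_int (2 * n) * pi"
    by (auto simp: exp_eq_1)
  hence "pi * (s - t) = pi * (2 * of_int n)" by (simp add: algebra_simps)
  hence "s - t = 2 * of_int n" using pi_gt_zero by (subst (asm) mult_left_cancel) auto
  moreover have "\<bar>s - t\<bar> < 2" using assms(1-4) by simp
  ultimately have "n = 0" by simp
  thus ?thesis using \<open>s - t = 2 * of_int n\<close> by simp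
qed

lemma w_inj:
  assumes "\<forall>l<L. - pi / 2 \<le> \<theta>t l \<and> \<theta>t l < pi / 2" "inj_on \<theta>t {..<L}"
  shows "inj_on (\<lambda>l. exp (\<i> * complex_of_real (pi * sin (\<theta>t l)))) {..<L}"
proof (rule inj_onI)
  fix a b assume a: "a \<in> {..<L}" and b: "b \<in> {..<L}"
    and e: "exp (\<i> * complex_of_real (pi * sin (\<theta>t a))) = exp (\<i> * complex_of_real (pi * sin (\<theta>t b)))"
  have ra: "- pi / 2 \<le> \<theta>t a" "\<theta>t a < pi / 2" and rb: "- pi / 2 \<le> \<theta>t b" "\<theta>t b < pi / 2"
    using assms(1) a b by auto
  have "sin (\<theta>t a) < 1"
  proof -
    have "sin (\<theta>t a) < sin (pi/2)" using ra by (intro sin_monotone_2pi) auto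
    thus ?thesis by simp
  qed
  moreover have "sin (\<theta>t b) < 1"
  proof -
    have "sin (\<theta>t b) < sin (pi/2)" using rb by (intro sin_monotone_2pi) auto
    thus ?thesis by simp
  qed
  ultimately have "sin (\<theta>t a) = sin (\<theta>t b)"
    using e by (intro exp_inj) auto
  hence "arcsin (sin (\<theta>t a)) = arcsin (sin (\<theta>t b))" by simp
  hence "\<theta>t a = \<theta>t b" using ra rb by (simp add: arcsin_sin)
  thus "a = b" using assms(2) a b by (auto simp: inj_on_def)
qed


lemma H_eq:
  assumes u: "u \<in> carrier_vec Nt" and v: "v \<in> carrier_vec Nt"
    and eq: "\<forall>l<L. (\<Sum>k<Nt. cnj (ula Nt (\<theta>t l) $ k) * u $ k) = (\<Sum>k<Nt. cnj (ula Nt (\<theta>t l) $ k) * v $ k)"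
  shows "channel Nr Nt L h \<theta>r \<theta>t *\<^sub>v u = channel Nr Nt L h \<theta>r \<theta>t *\<^sub>v v"
proof -
  have row: "(channel Nr Nt L h \<theta>r \<theta>t *\<^sub>v x) $ i =
     complex_of_real (sqrt (real Nr * real Nt / real L)) *
     (\<Sum>l<L. h l * ula Nr (\<theta>r l) $ i * (\<Sum>k<Nt. cnj (ula Nt (\<theta>t l) $ k) * x $ k))"
    if x: "x \<in> carrier_vec Nt" and i: "i < Nr" for x i
  proof -
    have "(channel Nr Nt L h \<theta>r \<theta>t *\<^sub>v x) $ i = (\<Sum>k<Nt.
        (complex_of_real (sqrt (real Nr * real Nt / real L)) *
        (\<Sum>l<L. h l * (ula Nr (\<theta>r l) $ i) * cnj (ula Nt (\<theta>t l) $ k))) * x $ k)"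
      using x i by (simp add: channel_def mult_mat_vec_def scalar_prod_def lessThan_atLeast0)
    also have "\<dots> = complex_of_real (sqrt (real Nr * real Nt / real L)) *
     (\<Sum>k<Nt. \<Sum>l<L. h l * ula Nr (\<theta>r l) $ i * (cnj (ula Nt (\<theta>t l) $ k) * x $ k))"
      by (simp add: sum_distrib_left sum_distrib_right mult.assoc)
    also have "\<dots> = complex_of_real (sqrt (real Nr * real Nt / real L)) *
     (\<Sum>l<L. \<Sum>k<Nt. h l * ula Nr (\<theta>r l) $ i * (cnj (ula Nt (\<theta>t l) $ k) * x $ k))"
      by (subst sum.swap) simp
    also have "\<dots> = complex_of_real (sqrt (real Nr * real Nt / real L)) *
     (\<Sum>l<L. h l * ula Nr (\<theta>r l) $ i * (\<Sum>k<Nt. cnj (ula Nt (\<theta>t l) $ k) * x $ k))"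
      by (simp add: sum_distrib_left)
    finally show ?thesis .
  qed
  show ?thesis
  proof (rule eq_vecI)
    fix i assume "i < dim_vec (channel Nr Nt L h \<theta>r \<theta>t *\<^sub>v v)"
    hence i: "i < Nr" by (simp add: channel_def)
    show "(channel Nr Nt L h \<theta>r \<theta>t *\<^sub>v u) $ i = (channel Nr Nt L h \<theta>r \<theta>t *\<^sub>v v) $ i"
      unfolding row[OF u i] row[OF v i] using eq by simp
  qed (simp add: channel_def)
qed


theorem lemma1:
  fixes Nr Nt L m :: nat and h :: "nat \<Rightarrow> complex" and \<theta>r \<theta>t :: "nat \<Rightarrow> real"
  assumes "0 < Nr" "0 < Nt" "0 < L" "0 < m"
    and "L \<le> min Nr Nt" "L \<le> m" "m \<le> Nt"
    and "\<forall>l<L. - pi / 2 \<le> \<theta>r l \<and> \<theta>r l < pi / 2"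
    and "\<forall>l<L. - pi / 2 \<le> \<theta>t l \<and> \<theta>t l < pi / 2"
    and "inj_on \<theta>t {..<L}"
    and "inj_on \<theta>r {..<L}"
  shows "col_space (channel Nr Nt L h \<theta>r \<theta>t * sel_mat Nt m) = col_space (channel Nr Nt L h \<theta>r \<theta>t)"
proof -
  let ?H = "channel Nr Nt L h \<theta>r \<theta>t"
  let ?S = "sel_mat Nt m"
  have H: "?H \<in> carrier_mat Nr Nt" by (simp add: channel_def)
  have S: "?S \<in> carrier_mat Nt m" by (simp add: sel_mat_def)
  have Sx: "(?S *\<^sub>v x) $ k = (if k < m then x $ k else 0)" if "x \<in> carrier_vec m" "k < Nt" for x k
  proof -
    have "(?S *\<^sub>v x) $ k = (\<Sum>j<m. (if k = j then 1 else 0) * x $ j)"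
      using that by (simp add: sel_mat_def mult_mat_vec_def scalar_prod_def lessThan_atLeast0)
    also have "\<dots> = (\<Sum>j<m. if k = j then x $ j else 0)"
      by (intro sum.cong) auto
    also have "\<dots> = (if k < m then x $ k else 0)"
      by (simp add: sum.delta[OF finite_lessThan])
    finally show ?thesis .
  qed
  show ?thesis
  proof
    show "col_space (?H * ?S) \<subseteq> col_space ?H"
    proof
      fix y assume "y \<in> col_space (?H * ?S)"
      then obtain x where x: "x \<in> carrier_vec m" and y: "y = (?H * ?S) *\<^sub>v x"
        using H S by (auto simp: col_space_def)
      have "y = ?H *\<^sub>v (?S *\<^sub>v x)" using y H S x by (simp add: assoc_mult_mat_vec)
      moreover have "?S *\<^sub>v x \<in> carrier_vec (dim_col ?H)" using S H x by simp
      ultimately show "y \<in> col_space ?H" unfolding col_space_def by blast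
    qed
  next
    show "col_space ?H \<subseteq> col_space (?H * ?S)"
    proof
      fix y assume "y \<in> col_space ?H"
      then obtain v where v: "v \<in> carrier_vec Nt" and y: "y = ?H *\<^sub>v v"
        using H by (auto simp: col_space_def)
      define w where "w l = exp (\<i> * complex_of_real (pi * sin (\<theta>t l)))" for l
      define z where "z l = (\<Sum>k<Nt. cnj (ula Nt (\<theta>t l) $ k) * v $ k)" for l
      have winj: "inj_on w {..<L}" unfolding w_def using w_inj assms(9,10) by blast
      obtain p where dp: "degree p < L" and pz: "\<forall>i<L. poly p (w i) = z i"
        using lagrange_exists[OF winj assms(3)] by blast
      define sN where "sN = complex_of_real (sqrt (real Nt))"
      have sN: "sN \<noteq> 0" using assms(2) by (simp add: sN_def)
      define x where "x = Matrix.vec m (\<lambda>k. sN * coeff p k)"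
      have x: "x \<in> carrier_vec m" by (simp add: x_def)
      have Sxc: "?S *\<^sub>v x \<in> carrier_vec Nt" using mult_mat_vec_carrier[OF S x] .
      have "?H *\<^sub>v (?S *\<^sub>v x) = ?H *\<^sub>v v"
      proof (rule H_eq[OF Sxc v], intro allI impI)
        fix l assume l: "l < L"
        have "(\<Sum>k<Nt. cnj (ula Nt (\<theta>t l) $ k) * (?S *\<^sub>v x) $ k)
            = (\<Sum>k<Nt. if k < m then cnj (ula Nt (\<theta>t l) $ k) * x $ k else 0)"
          using Sx[OF x] by (intro sum.cong) auto
        also have "\<dots> = (\<Sum>k\<in>{..<Nt} \<inter> {..<m}. cnj (ula Nt (\<theta>t l) $ k) * x $ k)"
          by (subst sum.inter_restrict) auto
        also have "{..<Nt} \<inter> {..<m} = {..<m}" using assms(7) by auto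
        also have "(\<Sum>k<m. cnj (ula Nt (\<theta>t l) $ k) * x $ k) = (\<Sum>k<m. coeff p k * w l ^ k)"
          using assms(7) sN by (intro sum.cong) (auto simp: cnj_ula x_def w_def sN_def)
        also have "\<dots> = (\<Sum>k\<le>degree p. coeff p k * w l ^ k)"
          using dp assms(6) by (intro sum.mono_neutral_right) (auto simp: coeff_eq_0)
        also have "\<dots> = z l" using pz l by (simp add: poly_altdef)
        finally show "(\<Sum>k<Nt. cnj (ula Nt (\<theta>t l) $ k) * (?S *\<^sub>v x) $ k) = (\<Sum>k<Nt. cnj (ula Nt (\<theta>t l) $ k) * v $ k)"
          unfolding z_def .
      qed
      hence "y = (?H * ?S) *\<^sub>v x" using y H S x by (simp add: assoc_mult_mat_vec)
      moreover have "x \<in> carrier_vec (dim_col (?H * ?S))" using x S by simp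
      ultimately show "y \<in> col_space (?H * ?S)" unfolding col_space_def by blast
    qed
  qed
qed

end
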